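(* Let $k \geq 3$ be an integer and let $A_k$ be a set of positive integers that contains no $k$-term geometric progression. Then \[ d_U(A_k) \leq 1 - \frac{1}{2^k -1} - \frac{2}{5}\left( \frac{1}{5^{k-1} } - \frac{1}{6^{k-1}} \right) - \frac{4}{15}\left( \frac{1}{7^{k-1} } - \frac{1}{10^{k-1}} \right). \]
   Context: A geometric progression of length $k$ with common ratio $r$, where $r \neq 0, \pm 1$ is a real number, is a sequence $(a_0, a_1, \ldots, a_{k-1})$ of nonzero real numbers with $a_i/a_{i-1} = r$ for $i = 1, \ldots, k-1$. A $k$-term geometric progression is a geometric progression of length $k$ with some common ratio $r$. A set contains no $k$-term geometric progression if it does not contain numbers $a_0, \ldots, a_{k-1}$ such that $(a_0, \ldots, a_{k-1})$ is a $k$-term geometric progression. For a set $A$ of positive integers, $A(n)$ denotes the number of $a \in A$ with $a \leq n$, and the upper asymptotic density is $d_U(A) = \limsup_{n \to \infty} A(n)/n$. *)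

theory Defs
  imports "HOL-Analysis.Analysis" "HOL-Library.Liminf_Limsup"
begin

definition geom_prog :: "nat \<Rightarrow> real \<Rightarrow> (nat \<Rightarrow> real) \<Rightarrow> bool" where
  "geom_prog k r a \<longleftrightarrow> r \<noteq> 0 \<and> r \<noteq> 1 \<and> r \<noteq> -1 \<and>
     (\<forall>i<k. a i \<noteq> 0) \<and> (\<forall>i. 1 \<le> i \<and> i < k \<longrightarrow> a i / a (i - 1) = r)"

definition no_k_GP :: "nat \<Rightarrow> nat set \<Rightarrow> bool" where
  "no_k_GP k A \<longleftrightarrow> \<not> (\<exists>r a. geom_prog k r a \<and> (\<forall>i<k. \<exists>m\<in>A. a i = real m))"

definition counting :: "nat set \<Rightarrow> nat \<Rightarrow> nat" where
  "counting A n = card {a \<in> A. a \<le> n}"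

definition upper_density :: "nat set \<Rightarrow> ereal" where
  "upper_density A = limsup (\<lambda>n. ereal (real (counting A n) / real n))"

end

theory Submission
  imports Defs
begin


definition gpset :: "nat \<Rightarrow> nat \<Rightarrow> nat \<Rightarrow> nat \<Rightarrow> nat set" where
  "gpset k p q m = {m * p^(k-1-i) * q^i | i. i < k}"

lemma gp_elem_notin:
  assumes "no_k_GP k A" "0 < p" "p < q" "0 < c"
  shows "\<exists>y\<in>gpset k p q c. y \<notin> A"
proof -
  define r where "r = real q / real p"
  define a where "a = (\<lambda>i. real c * real p^(k-1) * r^i)"
  have eq: "a i = real (c * p^(k-1-i) * q^i)" if "i<k" for i
  proof -
    have "real p^(k-1) = real p^(k-1-i) * real p^i"
      using that by (simp add: power_add[symmetric])
    moreover have "real p ^ i * r^i = real q ^ i" using assms(2)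
      by (simp add: r_def power_divide)
    ultimately show ?thesis unfolding a_def by (simp add: algebra_simps)
  qed
  have rne: "r \<noteq> 0" "r \<noteq> 1" "r \<noteq> -1" using assms(2,3) by (auto simp: r_def field_simps)
  have anz: "a i \<noteq> 0" for i using assms rne by (simp add: a_def)
  have gp: "geom_prog k r a"
    unfolding geom_prog_def
  proof (intro conjI allI impI rne)
    fix i show "a i \<noteq> 0" by (rule anz)
  next
    fix i assume i: "1 \<le> i \<and> i < k"
    then have "i = Suc (i-1)" by simp
    then have "a i = a (i-1) * r" unfolding a_def by (metis mult.assoc power_Suc2)
    thus "a i / a (i-1) = r" using anz[of "i-1"] by simp
  qed
  from assms(1) gp have "\<not> (\<forall>i<k. \<exists>m\<in>A. a i = real m)" unfolding no_k_GP_def by blast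
  then obtain i where i: "i<k" "\<not>(\<exists>m\<in>A. a i = real m)" by blast
  thus ?thesis using eq[OF i(1)] unfolding gpset_def by blast
qed

lemma gp_bounds:
  assumes "p \<le> q" "y \<in> gpset k p q m"
  shows "m * p^(k-1) \<le> y \<and> y \<le> m * q^(k-1)"
proof -
  obtain i where i: "i<k" "y = m * p^(k-1-i) * q^i" using assms(2) unfolding gpset_def by blast
  have e: "k - 1 = (k-1-i) + i" using i by simp
  have "p^(k-1) = p^(k-1-i) * p^i" by (subst e, simp add: power_add)
  also have "\<dots> \<le> p^(k-1-i) * q^i" by (simp add: assms(1) power_mono)
  finally have 1: "p^(k-1) \<le> p^(k-1-i) * q^i" .
  have "p^(k-1-i) * q^i \<le> q^(k-1-i) * q^i" by (simp add: assms(1) power_mono)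
  also have "\<dots> = q^(k-1)" by (subst e, simp add: power_add)
  finally have 2: "p^(k-1-i) * q^i \<le> q^(k-1)" .
  show ?thesis using 1 2 i(2) by (simp add: mult.assoc)
qed

lemma pow_cancel:
  fixes a b s :: nat
  assumes "prime s" "\<not> s dvd a" "\<not> s dvd b" "a * s^i = b * s^j"
  shows "i = j \<and> a = b"
proof -
  have key: "False" if "a' * s^i' = b' * s^j'" "i' < j'" "\<not> s dvd a'" for a' b' i' j'
  proof -
    have "s^j' = s^(j'-i') * s^i'" using that(2) by (simp add: power_add[symmetric])
    then have "a' * s^i' = (b' * s^(j'-i')) * s^i'" using that(1) by (metis mult.assoc)
    moreover have "s^i' \<noteq> 0" using assms(1) prime_gt_0_nat by simp
    ultimately have "a' = b' * s^(j'-i')" by (metis mult_right_cancel)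
    moreover have "s dvd s^(j'-i')" using that(2) by simp
    ultimately show False using that(3) by simp
  qed
  have "i = j"
  proof (rule ccontr)
    assume "i \<noteq> j"
    then consider "i < j" | "j < i" by linarith
    thus False
      by cases (use key[of a i b j] key[of b j a i] assms in auto)
  qed
  moreover have "s^j \<noteq> 0" using assms(1) prime_gt_0_nat by simp
  ultimately show ?thesis using assms(4) by (metis mult_right_cancel)
qed

lemma count_res:
  fixes q :: nat and S :: "nat set"
  assumes "0<q" "S \<subseteq> {..<q}" "\<And>t r. r\<in>S \<Longrightarrow> P (q*t+r)"
  shows "card S * (b div q - a div q - 1) \<le> card {m. P m \<and> a < m \<and> m \<le> b}"
proof -
  define J where "J = {a div q + 1 ..< b div q}"
  define f where "f = (\<lambda>(t,r). q*t + r)"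
  have fin: "finite S" using assms(2) finite_subset by blast
  have "inj_on f (J \<times> S)"
  proof (rule inj_onI)
    fix x y assume xy: "x \<in> J \<times> S" "y \<in> J \<times> S" "f x = f y"
    obtain t r t' r' where e: "x = (t,r)" "y = (t',r')" by (cases x, cases y) auto
    have "r < q" "r' < q" "q*t+r = q*t'+r'" using xy e assms(2) by (auto simp: f_def)
    moreover have "t = (q*t+r) div q" "t' = (q*t'+r') div q" "r = (q*t+r) mod q" "r' = (q*t'+r') mod q"
      using \<open>r<q\<close> \<open>r'<q\<close> by auto
    ultimately show "x = y" using e by metis
  qed
  moreover have "f ` (J \<times> S) \<subseteq> {m. P m \<and> a < m \<and> m \<le> b}"
  proof clarify
    fix t r assume tr: "t \<in> J" "r \<in> S"
    have rq: "r < q" using tr(2) assms(2) by auto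
    have "a < q * (a div q) + q" using assms(1)
      by (metis add_less_cancel_left div_mult_mod_eq mod_less_divisor mult.commute)
    also have "\<dots> = q * (a div q + 1)" by simp
    also have "\<dots> \<le> q * t" using tr(1) unfolding J_def by (intro mult_le_mono2) auto
    finally have 1: "a < q*t + r" by simp
    have "q*t + r < q*(t+1)" using rq by simp
    also have "\<dots> \<le> q*(b div q)" using tr(1) unfolding J_def by (intro mult_le_mono2) auto
    also have "\<dots> \<le> b" by simp
    finally have 2: "q*t+r \<le> b" by simp
    show "P (f (t,r)) \<and> a < f (t,r) \<and> f (t,r) \<le> b" using 1 2 assms(3)[OF tr(2)] by (simp add: f_def)
  qed
  moreover have "finite {m. P m \<and> a < m \<and> m \<le> b}" by (rule finite_subset[of _ "{..b}"]) auto
  ultimately have "card (J \<times> S) \<le> card {m. P m \<and> a < m \<and> m \<le> b}"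
    by (intro card_inj_on_le) auto
  moreover have "card (J \<times> S) = card S * (b div q - a div q - 1)"
    by (simp add: J_def card_cartesian_product)
  ultimately show ?thesis by simp
qed

lemma gcd_res: "gcd (q*t+r) q = gcd r (q::nat)"
  by (metis gcd.commute gcd_add_mult mult.commute)

lemma cop10: "r \<in> {1,3,7,9} \<Longrightarrow> coprime (10*t+r) (10::nat)"
  by (auto simp: coprime_iff_gcd_eq_1 gcd_res gcd_non_0_nat)

lemma cop30: "r \<in> {1,7,11,13,17,19,23,29} \<Longrightarrow> coprime (30*t+r) (30::nat)"
  by (auto simp: coprime_iff_gcd_eq_1 gcd_res gcd_non_0_nat)


lemma pr: "prime (3::nat)" "prime (5::nat)" "prime (7::nat)" "prime (2::nat)"
  by simp_all

lemma npow: "prime (p::nat) \<Longrightarrow> \<not> p dvd a \<Longrightarrow> \<not> p dvd a^x"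
  by (metis prime_dvd_power)

lemma d11:
  assumes "y \<in> gpset k 1 2 m" "y \<in> gpset k 1 2 m'" "n < 2^k*m'" "2^(k-1)*m \<le> n"
    "n < 2^k*m" "2^(k-1)*m' \<le> n" "k \<ge> 1"
  shows "m = m'"
proof -
  obtain i where "y = m*2^i" using assms(1) unfolding gpset_def by auto
  moreover obtain j where "y = m'*2^j" using assms(2) unfolding gpset_def by auto
  ultimately have ij: "y = m*2^i" "y = m'*2^j" by auto
  have key: False if "a*2^i' = b*2^j'" "i'<j'" "2^(k-1)*a \<le> n" "n < 2^k*b" for a b i' j'
  proof -
    have "(2::nat)^j' = 2^(j'-i') * 2^i'" using that(2) by (simp add: power_add[symmetric])
    then have "a * 2^i' = (b*2^(j'-i'))*2^i'" using that(1) by (metis mult.assoc)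
    then have "a = b*2^(j'-i')" by simp
    moreover have "(2::nat)^1 \<le> 2^(j'-i')" using that(2) by (intro power_increasing) auto
    ultimately have "2*b \<le> a" by simp
    then have "2^(k-1)*(2*b) \<le> 2^(k-1)*a" by simp
    moreover have "2^(k-1)*(2*b) = 2^k*b"
    proof -
      obtain j where "k = Suc j" using assms(7) by (cases k) auto
      then show ?thesis by simp
    qed
    ultimately show False using that(3,4) by linarith
  qed
  have "i = j"
  proof (rule ccontr)
    assume "i \<noteq> j"
    then consider "i<j" | "j<i" by linarith
    thus False by cases (use key[of m i m' j] key[of m' j m i] ij assms in auto)
  qed
  then show ?thesis using ij by simp
qed

lemma d1odd:
  assumes "y \<in> gpset k 1 2 m'" "2^(k-1)*m' \<le> n" "y \<in> gpset k p q m" "odd p" "odd q" "odd m"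
    "p \<le> q" "n < 2^(k-1)*(m*p^(k-1))"
  shows False
proof -
  obtain i where i: "y = m'*2^i" using assms(1) unfolding gpset_def by auto
  obtain j where j: "y = m*p^(k-1-j)*q^j" using assms(3) unfolding gpset_def by auto
  have oy: "odd y" using j assms(4,5,6) by simp
  have b: "m*p^(k-1) \<le> y" using gp_bounds[OF assms(7,3)] by simp
  show False
  proof (cases "i = 0")
    case True
    then have "y = m'" using i by simp
    then have "2^(k-1)*y \<le> n" using assms(2) by simp
    then show False using assms(8) mult_le_mono2[OF b, of "2^(k-1)"] by linarith
  next
    case False
    then have "even y" using i by simp
    then show False using oy by simp
  qed
qed

lemma d22:
  assumes "y \<in> gpset k 3 5 m" "y \<in> gpset k 3 5 m'" "\<not> 5 dvd m" "\<not> 5 dvd m'"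
  shows "m = m'"
proof -
  obtain i where "y = (m*3^(k-1-i))*5^i" using assms(1) unfolding gpset_def by auto
  moreover obtain j where "y = (m'*3^(k-1-j))*5^j" using assms(2) unfolding gpset_def by auto
  ultimately have ij: "y = (m*3^(k-1-i))*5^i" "y = (m'*3^(k-1-j))*5^j" by auto
  have n1: "\<not> 5 dvd m*3^(k-1-i)" "\<not> 5 dvd m'*3^(k-1-j)" using assms(3,4) npow[OF pr(2), of 3]
    by (auto simp: prime_dvd_mult_iff[OF pr(2)])
  have "(m*3^(k-1-i))*5^i = (m'*3^(k-1-j))*5^j" using ij by simp
  from pow_cancel[OF pr(2) n1 this] have "i = j" "m*3^(k-1-i) = m'*3^(k-1-j)" by auto
  then show ?thesis by simp
qed

lemma d33:
  assumes "y \<in> gpset k 5 7 m" "y \<in> gpset k 5 7 m'" "\<not> 5 dvd m" "\<not> 5 dvd m'"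
  shows "m = m'"
proof -
  obtain i where "y = (m*7^i)*5^(k-1-i)" "i<k" using assms(1) unfolding gpset_def by (auto simp: algebra_simps)
  moreover obtain j where "y = (m'*7^j)*5^(k-1-j)" "j<k" using assms(2) unfolding gpset_def by (auto simp: algebra_simps)
  ultimately have ij: "y = (m*7^i)*5^(k-1-i)" "y = (m'*7^j)*5^(k-1-j)" "i<k" "j<k" by auto
  have n1: "\<not> 5 dvd m*7^i" "\<not> 5 dvd m'*7^j" using assms(3,4) npow[OF pr(2), of 7]
    by (auto simp: prime_dvd_mult_iff[OF pr(2)])
  have "(m*7^i)*5^(k-1-i) = (m'*7^j)*5^(k-1-j)" using ij by simp
  from pow_cancel[OF pr(2) n1 this] have "k-1-i = k-1-j" "m*7^i = m'*7^j" by auto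
  then have "i = j" using ij(3,4) by simp
  then show ?thesis using \<open>m*7^i = m'*7^j\<close> by simp
qed

lemma d23:
  assumes "y \<in> gpset k 3 5 m" "y \<in> gpset k 5 7 m'" "\<not> 3 dvd m'" "\<not> 5 dvd m" "\<not> 5 dvd m'"
    "n < 6^(k-1)*m" "7^(k-1)*m' \<le> n"
  shows False
proof -
  obtain i where "y = m*3^(k-1-i)*5^i" "i<k" using assms(1) unfolding gpset_def by auto
  moreover obtain j where "y = (m'*7^j)*5^(k-1-j)" "j<k" using assms(2) unfolding gpset_def by (auto simp: algebra_simps)
  ultimately have ij: "y = m*3^(k-1-i)*5^i" "y = (m'*7^j)*5^(k-1-j)" "i<k" "j<k" by auto
  have "\<not> 3 dvd y" using ij(2) assms(3) npow[OF pr(1), of 7] npow[OF pr(1), of 5]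
    by (auto simp: prime_dvd_mult_iff[OF pr(1)])
  then have "k-1-i = 0" using ij(1) by (cases "k-1-i") auto
  then have "i = k-1" using ij(3) by simp
  then have y: "y = m*5^(k-1)" using ij(1) by simp
  have n1: "\<not> 5 dvd m" "\<not> 5 dvd m'*7^j" using assms(4,5) npow[OF pr(2), of 7]
    by (auto simp: prime_dvd_mult_iff[OF pr(2)])
  have "m*5^(k-1) = (m'*7^j)*5^(k-1-j)" using ij y by simp
  from pow_cancel[OF pr(2) n1 this] have "k-1 = k-1-j" "m = m'*7^j" by auto
  then have "j = 0" using ij(4) by simp
  then have "m = m'" using \<open>m = m'*7^j\<close> by simp
  moreover have "(6::nat)^(k-1) \<le> 7^(k-1)" by (simp add: power_mono)
  ultimately have "6^(k-1)*m \<le> 7^(k-1)*m'" by simp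
  then show False using assms(6,7) by linarith
qed


lemma cop_prime: "coprime (m::nat) c \<Longrightarrow> p dvd c \<Longrightarrow> prime p \<Longrightarrow> \<not> p dvd m"
  by (meson coprime_common_divisor not_prime_unit)

lemma gp_sub:
  assumes "p \<le> q" "n < 2^k * (m*p^(k-1))" "m*q^(k-1) \<le> n"
  shows "gpset k p q m \<subseteq> {n div 2^k<..n}"
proof
  fix y assume y: "y \<in> gpset k p q m"
  from gp_bounds[OF assms(1) y] have b: "m*p^(k-1) \<le> y" "y \<le> m*q^(k-1)" by auto
  have "n < 2^k * y" using assms(2) mult_le_mono2[OF b(1), of "2^k"] by linarith
  then have "n div 2^k < y" by (simp add: div_less_iff_less_mult mult.commute)
  then show "y \<in> {n div 2^k<..n}" using b(2) assms(3) by auto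
qed

lemma pow6: "(6::nat)^x = 2^x*3^x" and pow10: "(10::nat)^x = 2^x*5^x"
  by (simp_all add: power_mult_distrib[symmetric])

lemma step_card:
  fixes n k :: nat
  assumes k3: "k \<ge> 3" and gp: "no_k_GP k A"
  shows "card {n div 2^k <.. n div 2^(k-1)}
       + card {m. coprime m 10 \<and> n div 6^(k-1) < m \<and> m \<le> n div 5^(k-1)}
       + card {m. coprime m 30 \<and> n div 10^(k-1) < m \<and> m \<le> n div 7^(k-1)}
       + card (A \<inter> {n div 2^k<..n}) \<le> n - n div 2^k"
proof -
  define M :: nat where "M = 2^k"
  define T where "T = {n div M<..n}"
  define R1 where "R1 = {n div M <.. n div 2^(k-1)}"
  define R2 where "R2 = {m. coprime m 10 \<and> n div 6^(k-1) < m \<and> m \<le> n div 5^(k-1)}"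
  define R3 where "R3 = {m. coprime m 30 \<and> n div 10^(k-1) < m \<and> m \<le> n div 7^(k-1)}"
  define I where "I = Pair (1::nat) ` R1 \<union> Pair 2 ` R2 \<union> Pair 3 ` R3"
  define G where "G = (\<lambda>(t::nat,m). if t = 1 then gpset k 1 2 m else if t = 2 then gpset k 3 5 m else gpset k 5 7 m)"
  have Mk: "M = 2^(k-1)*2"
  proof -
    obtain j where "k = Suc j" using k3 by (cases k) auto
    then show ?thesis unfolding M_def by simp
  qed
  have r1: "n < M*m \<and> 2^(k-1)*m \<le> n" if "m \<in> R1" for m
    using that unfolding R1_def
    by (auto simp: div_less_iff_less_mult less_eq_div_iff_mult_less_eq M_def mult.commute)
  have r2: "n < 6^(k-1)*m \<and> 5^(k-1)*m \<le> n \<and> odd m \<and> \<not> 5 dvd m \<and> m > 0" if "m \<in> R2" for m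
  proof -
    have c: "coprime m 10" using that unfolding R2_def by auto
    have "\<not> 2 dvd m" by (rule cop_prime[OF c _ pr(4)]) simp
    moreover have "\<not> 5 dvd m" by (rule cop_prime[OF c _ pr(2)]) simp
    moreover have "n < 6^(k-1)*m \<and> 5^(k-1)*m \<le> n" using that unfolding R2_def
      by (auto simp: div_less_iff_less_mult less_eq_div_iff_mult_less_eq mult.commute)
    ultimately show ?thesis by (auto intro!: gr0I)
  qed
  have r3: "n < 10^(k-1)*m \<and> 7^(k-1)*m \<le> n \<and> odd m \<and> \<not> 3 dvd m \<and> \<not> 5 dvd m \<and> m > 0" if "m \<in> R3" for m
  proof -
    have c: "coprime m 30" using that unfolding R3_def by auto
    have "\<not> 2 dvd m" by (rule cop_prime[OF c _ pr(4)]) simp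
    moreover have "\<not> 3 dvd m" by (rule cop_prime[OF c _ pr(1)]) simp
    moreover have "\<not> 5 dvd m" by (rule cop_prime[OF c _ pr(2)]) simp
    moreover have "n < 10^(k-1)*m \<and> 7^(k-1)*m \<le> n" using that unfolding R3_def
      by (auto simp: div_less_iff_less_mult less_eq_div_iff_mult_less_eq mult.commute)
    ultimately show ?thesis by (auto intro!: gr0I)
  qed
  have r1pos: "m > 0" if "m \<in> R1" for m using that unfolding R1_def by auto
  have sub: "G x \<subseteq> T" if "x \<in> I" for x
  proof -
    from that consider (a) m where "x = (1,m)" "m \<in> R1" | (b) m where "x = (2,m)" "m \<in> R2"
      | (c) m where "x = (3,m)" "m \<in> R3" unfolding I_def by auto
    then show ?thesis
    proof cases
      case a
      then show ?thesis using r1[OF a(2)] gp_sub[of 1 2 n k m] unfolding G_def T_def M_def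
        by (auto simp: mult.commute)
    next
      case b
      have "6^(k-1)*m \<le> 2^k*(m*3^(k-1))" using Mk unfolding M_def pow6 by simp
      then have "n < 2^k*(m*3^(k-1))" using r2[OF b(2)] by linarith
      moreover have "m*5^(k-1) \<le> n" using r2[OF b(2)] by (simp add: mult.commute)
      ultimately show ?thesis using gp_sub[of 3 5 n k m] unfolding G_def T_def M_def b(1) by auto
    next
      case c
      have "10^(k-1)*m \<le> 2^k*(m*5^(k-1))" using Mk unfolding M_def pow10 by simp
      then have "n < 2^k*(m*5^(k-1))" using r3[OF c(2)] by linarith
      moreover have "m*7^(k-1) \<le> n" using r3[OF c(2)] by (simp add: mult.commute)
      ultimately show ?thesis using gp_sub[of 5 7 n k m] unfolding G_def T_def M_def c(1) by auto
    qed
  qed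
  have ex: "\<exists>y\<in>G x. y \<notin> A" if "x \<in> I" for x
  proof -
    from that consider (a) m where "x = (1,m)" "m \<in> R1" | (b) m where "x = (2,m)" "m \<in> R2"
      | (c) m where "x = (3,m)" "m \<in> R3" unfolding I_def by auto
    then show ?thesis
    proof cases
      case a then show ?thesis using gp_elem_notin[OF gp, of 1 2 m] r1pos unfolding G_def by auto
    next
      case b then show ?thesis using gp_elem_notin[OF gp, of 3 5 m] r2 unfolding G_def by auto
    next
      case c then show ?thesis using gp_elem_notin[OF gp, of 5 7 m] r3 unfolding G_def by auto
    qed
  qed
  have G1: "G (1,m) = gpset k 1 2 m" and G2: "G (2,m) = gpset k 3 5 m" and G3: "G (3,m) = gpset k 5 7 m" for m
    by (simp_all add: G_def)
  have disj: "x = x'" if "x \<in> I" "x' \<in> I" "y \<in> G x" "y \<in> G x'" for x x' y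
  proof -
    have M2: "2^(k-1)*m \<le> n" if "m \<in> R1" for m using r1[OF that] by simp
    have M2': "n < 2^k*m" if "m \<in> R1" for m using r1[OF that] M_def by simp
    have e6: "2^(k-1)*(m*3^(k-1)) = 6^(k-1)*m" for m :: nat by (simp add: pow6)
    have e10: "2^(k-1)*(m*5^(k-1)) = 10^(k-1)*m" for m :: nat by (simp add: pow10)
    have q2: "n < 2^(k-1)*(m*3^(k-1))" if "m\<in>R2" for m unfolding e6 using r2[OF that] by blast
    have q3: "n < 2^(k-1)*(m*5^(k-1))" if "m\<in>R3" for m unfolding e10 using r3[OF that] by blast
    have o2: "odd m" "\<not> 5 dvd m" "n < 6^(k-1)*m" if "m\<in>R2" for m using r2[OF that] by blast+
    have o3: "odd m" "\<not> 3 dvd m" "\<not> 5 dvd m" "7^(k-1)*m \<le> n" if "m\<in>R3" for m using r3[OF that] by blast+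
    from that(1) consider (a) m where "x = (1,m)" "m \<in> R1" | (b) m where "x = (2,m)" "m \<in> R2"
      | (c) m where "x = (3,m)" "m \<in> R3" unfolding I_def by blast
    note X = this
    from that(2) consider (a) m where "x' = (1,m)" "m \<in> R1" | (b) m where "x' = (2,m)" "m \<in> R2"
      | (c) m where "x' = (3,m)" "m \<in> R3" unfolding I_def by blast
    note X' = this
    show ?thesis
    proof (cases rule: X)
      case (a m)
      have y: "y \<in> gpset k 1 2 m" using that(3) a(1) G1 by simp
      show ?thesis
      proof (cases rule: X')
        case (a m')
        have y': "y \<in> gpset k 1 2 m'" using that(4) a(1) G1 by simp
        have "m = m'" by (rule d11[OF y y' M2'[OF a(2)] M2[OF \<open>m \<in> R1\<close>] M2'[OF \<open>m \<in> R1\<close>] M2[OF a(2)]]) (use k3 in simp)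
        then show ?thesis using \<open>x = (1,m)\<close> a(1) by simp
      next
        case (b m')
        have y': "y \<in> gpset k 3 5 m'" using that(4) b(1) G2 by simp
        have False by (rule d1odd[OF y M2[OF \<open>m \<in> R1\<close>] y' _ _ o2(1)[OF b(2)] _ q2[OF b(2)]]) simp_all
        then show ?thesis ..
      next
        case (c m')
        have y': "y \<in> gpset k 5 7 m'" using that(4) c(1) G3 by simp
        have False by (rule d1odd[OF y M2[OF \<open>m \<in> R1\<close>] y' _ _ o3(1)[OF c(2)] _ q3[OF c(2)]]) simp_all
        then show ?thesis ..
      qed
    next
      case (b m)
      have y: "y \<in> gpset k 3 5 m" using that(3) b(1) G2 by simp
      show ?thesis
      proof (cases rule: X')
        case (a m')
        have y': "y \<in> gpset k 1 2 m'" using that(4) a(1) G1 by simp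
        have False by (rule d1odd[OF y' M2[OF a(2)] y _ _ o2(1)[OF \<open>m \<in> R2\<close>] _ q2[OF \<open>m \<in> R2\<close>]]) simp_all
        then show ?thesis ..
      next
        case (b m')
        have y': "y \<in> gpset k 3 5 m'" using that(4) b(1) G2 by simp
        have "m = m'" by (rule d22[OF y y' o2(2)[OF \<open>m \<in> R2\<close>] o2(2)[OF b(2)]])
        then show ?thesis using \<open>x = (2,m)\<close> b(1) by simp
      next
        case (c m')
        have y': "y \<in> gpset k 5 7 m'" using that(4) c(1) G3 by simp
        have False by (rule d23[OF y y' o3(2)[OF c(2)] o2(2)[OF \<open>m \<in> R2\<close>] o3(3)[OF c(2)] o2(3)[OF \<open>m \<in> R2\<close>] o3(4)[OF c(2)]])
        then show ?thesis ..
      qed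
    next
      case (c m)
      have y: "y \<in> gpset k 5 7 m" using that(3) c(1) G3 by simp
      show ?thesis
      proof (cases rule: X')
        case (a m')
        have y': "y \<in> gpset k 1 2 m'" using that(4) a(1) G1 by simp
        have False by (rule d1odd[OF y' M2[OF a(2)] y _ _ o3(1)[OF \<open>m \<in> R3\<close>] _ q3[OF \<open>m \<in> R3\<close>]]) simp_all
        then show ?thesis ..
      next
        case (b m')
        have y': "y \<in> gpset k 3 5 m'" using that(4) b(1) G2 by simp
        have False by (rule d23[OF y' y o3(2)[OF \<open>m \<in> R3\<close>] o2(2)[OF b(2)] o3(3)[OF \<open>m \<in> R3\<close>] o2(3)[OF b(2)] o3(4)[OF \<open>m \<in> R3\<close>]])
        then show ?thesis ..
      next
        case (c m')
        have y': "y \<in> gpset k 5 7 m'" using that(4) c(1) G3 by simp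
        have "m = m'" by (rule d33[OF y y' o3(3)[OF \<open>m \<in> R3\<close>] o3(3)[OF c(2)]])
        then show ?thesis using \<open>x = (3,m)\<close> c(1) by simp
      qed
    qed
  qed
  define h where "h = (\<lambda>x. SOME y. y \<in> G x \<and> y \<notin> A)"
  have hx: "h x \<in> G x \<and> h x \<notin> A" if "x \<in> I" for x
  proof -
    from ex[OF that] have "\<exists>y. y \<in> G x \<and> y \<notin> A" by blast
    then show ?thesis unfolding h_def by (rule someI_ex)
  qed
  have "inj_on h I"
  proof (rule inj_onI)
    fix x x' assume xx: "x \<in> I" "x' \<in> I" "h x = h x'"
    have "h x \<in> G x" "h x \<in> G x'" using hx[OF xx(1)] hx[OF xx(2)] xx(3) by auto
    then show "x = x'" by (rule disj[OF xx(1,2)])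
  qed
  moreover have "h ` I \<subseteq> T - A" using hx sub by blast
  moreover have "finite (T - A)" unfolding T_def by simp
  ultimately have cI: "card I \<le> card (T - A)" by (rule card_inj_on_le)
  have fR: "finite R1" "finite R2" "finite R3"
    unfolding R1_def R2_def R3_def by (auto intro: finite_subset[of _ "{..n}"])
  have c1: "card (Pair (1::nat) ` R1) = card R1" by (rule card_image) (simp add: inj_on_def)
  have c2: "card (Pair (2::nat) ` R2) = card R2" by (rule card_image) (simp add: inj_on_def)
  have c3: "card (Pair (3::nat) ` R3) = card R3" by (rule card_image) (simp add: inj_on_def)
  have "card (Pair (1::nat) ` R1 \<union> Pair 2 ` R2) = card R1 + card R2"
    by (subst card_Un_disjoint) (use fR c1 c2 in auto)
  then have "card I = card R1 + card R2 + card R3"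
    unfolding I_def by (subst card_Un_disjoint) (use fR c3 in auto)
  moreover have "card (T - A) = card T - card (A \<inter> T)"
    using card_Diff_subset_Int[of T A] by (simp add: T_def Int_commute)
  moreover have "card (A \<inter> T) \<le> card T" unfolding T_def by (intro card_mono) auto
  moreover have "card T = n - n div M" unfolding T_def by simp
  ultimately show ?thesis using cI unfolding R1_def R2_def R3_def T_def M_def by linarith
qed


lemma div_lower: "0 < d \<Longrightarrow> real n / real d - 1 \<le> real (n div d)"
proof -
  assume d: "0 < d"
  have e: "n = d * (n div d) + n mod d" by simp
  have "real n = real d * real (n div d) + real (n mod d)"
    by (subst e) (simp only: of_nat_add of_nat_mult)
  moreover have "real (n mod d) \<le> real d" using d by simp
  ultimately have "real n \<le> real d * real (n div d) + real d" by linarith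
  then have "real n / real d \<le> real (n div d) + 1" using d by (simp add: field_simps)
  then show ?thesis by simp
qed

lemma div_upper: "real (n div d) \<le> real n / real d"
proof (cases "d = 0")
  case False
  have "d * (n div d) \<le> n" by simp
  then have "real (d * (n div d)) \<le> real n" by (simp only: of_nat_le_iff)
  then have "real d * real (n div d) \<le> real n" by simp
  then show ?thesis using False by (simp add: field_simps)
qed simp

lemma count_real:
  fixes q :: nat and S :: "nat set"
  assumes "0<q" "S \<subseteq> {..<q}" "\<And>t r. r\<in>S \<Longrightarrow> P (q*t+r)"
  shows "real (card S) * (real b / q - real a / q - 2) \<le> real (card {m. P m \<and> a < m \<and> m \<le> b})"
proof -
  have "real (b div q - a div q - 1) \<ge> real (b div q) - real (a div q) - 1" by linarith
  moreover have "real (b div q) \<ge> real b / q - 1" using div_lower assms(1) by blast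
  moreover have "real (a div q) \<le> real a / q" by (rule div_upper)
  ultimately have "real (b div q - a div q - 1) \<ge> real b / q - real a / q - 2" by linarith
  then have "real (card S) * (real b / q - real a / q - 2) \<le> real (card S) * real (b div q - a div q - 1)"
    by (intro mult_left_mono) auto
  also have "\<dots> \<le> real (card {m. P m \<and> a < m \<and> m \<le> b})"
  proof -
    have "card S * (b div q - a div q - 1) \<le> card {m. P m \<and> a < m \<and> m \<le> b}"
      by (rule count_res[of q S P b a]) (use assms in auto)
    then have "real (card S * (b div q - a div q - 1)) \<le> real (card {m. P m \<and> a < m \<and> m \<le> b})"
      by (simp only: of_nat_le_iff)
    then show ?thesis by simp
  qed
  finally show ?thesis .
qed

lemma counting_split:
  assumes "0 < M"
  shows "counting A n = counting A (n div M) + card (A \<inter> {n div M<..n})"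
proof -
  have "{a\<in>A. a \<le> n} = {a\<in>A. a \<le> n div M} \<union> (A \<inter> {n div M<..n})"
    by (auto intro: le_trans[OF _ div_le_dividend])
  moreover have "{a\<in>A. a \<le> n div M} \<inter> (A \<inter> {n div M<..n}) = {}" by auto
  ultimately show ?thesis unfolding counting_def
    by (simp add: card_Un_disjoint)
qed

lemma aux2: "4*(u/10 - v/10 - 2) \<le> c \<Longrightarrow> X - 1 \<le> u \<Longrightarrow> v \<le> Y \<Longrightarrow> 2/5*(X - Y) - 9 \<le> (c::real)"
  by (simp add: field_simps)

lemma aux3: "8*(u/30 - v/30 - 2) \<le> c \<Longrightarrow> X - 1 \<le> u \<Longrightarrow> v \<le> Y \<Longrightarrow> 4/15*(X - Y) - 17 \<le> (c::real)"
  by (simp add: field_simps)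

lemma auxE: "a < b \<Longrightarrow> c < d \<Longrightarrow> 0 < 2/5*(b - a) + 4/15*(d - (c::real))"
  by (simp add: field_simps)

lemma auxE1: "a \<le> 1 \<Longrightarrow> c \<le> 1 \<Longrightarrow> 0 \<le> b \<Longrightarrow> 0 \<le> d \<Longrightarrow> 2/5*(a - b) + 4/15*(c - (d::real)) \<le> 2/3"
  by (simp add: field_simps)

lemma step_real:
  fixes n k :: nat
  assumes k3: "k \<ge> 3" and gp: "no_k_GP k A"
  shows "real (counting A n) \<le> real (counting A (n div 2^k)) + real n - 2 * real n / 2^k
     - (2/5 * (1 / 5 ^ (k - 1) - 1 / 6 ^ (k - 1)) + 4/15 * (1 / 7 ^ (k - 1) - 1 / 10 ^ (k - 1))) * real n + 28"
proof -
  define M :: nat where "M = 2^k"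
  have Mk: "real M = 2 * 2^(k-1)"
  proof -
    obtain j where "k = Suc j" using k3 by (cases k) auto
    then show ?thesis unfolding M_def by simp
  qed
  define c1 where "c1 = card {n div M <.. n div 2^(k-1)}"
  define c2 where "c2 = card {m. coprime m 10 \<and> n div 6^(k-1) < m \<and> m \<le> n div 5^(k-1)}"
  define c3 where "c3 = card {m. coprime m 30 \<and> n div 10^(k-1) < m \<and> m \<le> n div 7^(k-1)}"
  have main: "c1 + c2 + c3 + card (A \<inter> {n div M<..n}) \<le> n - n div M"
    using step_card[OF k3 gp, of n] unfolding c1_def c2_def c3_def M_def .
  have sp: "counting A n = counting A (n div M) + card (A \<inter> {n div M<..n})"
    using counting_split[of M A n] unfolding M_def by simp
  have M0: "0 < M" unfolding M_def by simp
  have b1: "real c1 \<ge> real n / M - 1"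
  proof -
    have "real c1 \<ge> real (n div 2^(k-1)) - real (n div M)" unfolding c1_def by simp
    moreover have "real (n div 2^(k-1)) \<ge> real n / 2^(k-1) - 1" using div_lower[of "2^(k-1)" n] by simp
    moreover have "real (n div M) \<le> real n / M" by (rule div_upper)
    moreover have "real n / 2^(k-1) = 2 * (real n / M)" using Mk by (simp add: field_simps)
    ultimately show ?thesis by linarith
  qed
  have b2: "real c2 \<ge> 2/5 * (real n / 5^(k-1) - real n / 6^(k-1)) - 9"
  proof -
    have "card {1,3,7,9::nat} = 4" by simp
    moreover have "real c2 \<ge> real (card {1,3,7,9::nat}) * (real (n div 5^(k-1)) / 10 - real (n div 6^(k-1)) / 10 - 2)"
      unfolding c2_def using count_real[of 10 "{1,3,7,9}" "\<lambda>m. coprime m 10"] cop10 by auto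
    ultimately have "real c2 \<ge> 4 * (real (n div 5^(k-1)) / 10 - real (n div 6^(k-1)) / 10 - 2)" by simp
    moreover have "real (n div 5^(k-1)) \<ge> real n / 5^(k-1) - 1" using div_lower[of "5^(k-1)" n] by simp
    moreover have "real (n div 6^(k-1)) \<le> real n / 6^(k-1)" using div_upper[of n "6^(k-1)"] by simp
    ultimately show ?thesis by (rule aux2)
  qed
  have b3: "real c3 \<ge> 4/15 * (real n / 7^(k-1) - real n / 10^(k-1)) - 17"
  proof -
    have "card {1,7,11,13,17,19,23,29::nat} = 8" by simp
    moreover have "real c3 \<ge> real (card {1,7,11,13,17,19,23,29::nat}) * (real (n div 7^(k-1)) / 30 - real (n div 10^(k-1)) / 30 - 2)"
      unfolding c3_def using count_real[of 30 "{1,7,11,13,17,19,23,29}" "\<lambda>m. coprime m 30"] cop30 by auto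
    ultimately have "real c3 \<ge> 8 * (real (n div 7^(k-1)) / 30 - real (n div 10^(k-1)) / 30 - 2)" by simp
    moreover have "real (n div 7^(k-1)) \<ge> real n / 7^(k-1) - 1" using div_lower[of "7^(k-1)" n] by simp
    moreover have "real (n div 10^(k-1)) \<le> real n / 10^(k-1)" using div_upper[of n "10^(k-1)"] by simp
    ultimately show ?thesis by (rule aux3)
  qed
  have bT: "real (n - n div M) \<le> real n - real n / M + 1"
    using div_lower[OF M0, of n] div_le_dividend[of n M] by (simp add: of_nat_diff)
  have "counting A n + c1 + c2 + c3 \<le> counting A (n div M) + (n - n div M)"
    using main sp by linarith
  then have "real (counting A n + c1 + c2 + c3) \<le> real (counting A (n div M) + (n - n div M))"
    by (simp only: of_nat_le_iff)
  then have "real (counting A n) + real c1 + real c2 + real c3 \<le> real (counting A (n div M)) + real (n - n div M)"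
    by (simp only: of_nat_add)
  then have "real (counting A n) \<le> real (counting A (n div M)) + real n - 2 * (real n / M)
     - (2/5 * (real n / 5^(k-1) - real n / 6^(k-1)) + 4/15 * (real n / 7^(k-1) - real n / 10^(k-1))) + 28"
    using b1 b2 b3 bT by linarith
  moreover have "2/5 * (real n / 5^(k-1) - real n / 6^(k-1)) + 4/15 * (real n / 7^(k-1) - real n / 10^(k-1))
     = (2/5 * (1 / 5 ^ (k - 1) - 1 / 6 ^ (k - 1)) + 4/15 * (1 / 7 ^ (k - 1) - 1 / 10 ^ (k - 1))) * real n"
    by (simp add: field_simps)
  moreover have "real M = 2^k" unfolding M_def by simp
  ultimately show ?thesis unfolding M_def by simp
qed


lemma ring_aux: "(1 - a - E) * x - (1 - a - E)*y = (1-E)*(x-y) - a*(x-y)" for a E x y :: real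
  by (simp add: algebra_simps)
lemma ident_aux:
  assumes "(P::real) \<noteq> 0" "P - 1 \<noteq> 0"
  shows "(1 - 1/(P-1) - E) * x - (1 - 1/(P-1) - E)*(x/P) = x - 2*(x/P) - E*x + E*(x/P)"
proof -
  have "x - x/P = x * (P-1) / P" using assms(1) by (simp add: field_simps)
  then have a: "1/(P-1) * (x - x/P) = x/P" using assms(2) by simp
  have "(1 - 1/(P-1) - E) * x - (1 - 1/(P-1) - E)*(x/P) = (1 - E) * (x - x/P) - 1/(P-1) * (x - x/P)"
    by (rule ring_aux)
  also have "\<dots> = (1 - E) * (x - x/P) - x/P" using a by simp
  also have "\<dots> = x - 2*(x/P) - E*x + E*(x/P)" by (simp add: algebra_simps add_divide_distrib[symmetric] diff_divide_distrib[symmetric])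
  finally show ?thesis .
qed

theorem corollary1:
  fixes k :: nat and A :: "nat set"
  assumes "k \<ge> 3"
    and "\<forall>a\<in>A. a > 0"
    and "no_k_GP k A"
  shows "upper_density A \<le> ereal (1 - 1 / (2 ^ k - 1)
            - 2/5 * (1 / 5 ^ (k - 1) - 1 / 6 ^ (k - 1))
            - 4/15 * (1 / 7 ^ (k - 1) - 1 / 10 ^ (k - 1)))"
proof -
  note k3 = assms(1)
  define E :: real where "E = 2/5 * (1 / 5 ^ (k - 1) - 1 / 6 ^ (k - 1)) + 4/15 * (1 / 7 ^ (k - 1) - 1 / 10 ^ (k - 1))"
  define \<beta> :: real where "\<beta> = 1 - 1 / (2 ^ k - 1) - E"
  define P :: real where "P = 2^k"
  have tgt: "1 - 1 / (2 ^ k - 1) - 2/5 * (1 / 5 ^ (k - 1) - 1 / 6 ^ (k - 1))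
            - 4/15 * (1 / 7 ^ (k - 1) - 1 / 10 ^ (k - 1)) = \<beta>"
    unfolding \<beta>_def E_def by simp
  have P8: "P \<ge> 8"
  proof -
    have "(2::real)^3 \<le> 2^k" by (rule power_increasing) (use k3 in auto)
    then show ?thesis unfolding P_def by simp
  qed
  have k1: "k - 1 \<noteq> 0" using k3 by simp
  have l56: "1/(6::real)^(k-1) < 1/5^(k-1)"
  proof -
    have "(5::real)^(k-1) < 6^(k-1)" by (rule power_strict_mono) (use k1 in auto)
    then show ?thesis by (intro frac_less2) auto
  qed
  have l710: "1/(10::real)^(k-1) < 1/7^(k-1)"
  proof -
    have "(7::real)^(k-1) < 10^(k-1)" by (rule power_strict_mono) (use k1 in auto)
    then show ?thesis by (intro frac_less2) auto
  qed
  have E0: "E > 0" unfolding E_def by (rule auxE[OF l56 l710])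
  have E1: "E \<le> 2/3"
  proof -
    have "1/(5::real)^(k-1) \<le> 1" "1/(7::real)^(k-1) \<le> 1" by simp_all
    moreover have "1/(6::real)^(k-1) \<ge> 0" "1/(10::real)^(k-1) \<ge> 0" by simp_all
    ultimately show ?thesis unfolding E_def by (rule auxE1)
  qed
  have b7: "1 / (2 ^ k - 1) \<le> (1::real) / 7"
    using P8 unfolding P_def by (intro divide_left_mono) auto
  have \<beta>0: "\<beta> \<ge> 0" unfolding \<beta>_def using E1 b7 by linarith
  have ident: "\<beta> * x - \<beta> * (x / P) = x - 2 * (x / P) - E * x + E * (x / P)" for x
  proof -
    have "P - 1 \<noteq> 0" "P \<noteq> 0" using P8 by auto
    moreover have "\<beta> = 1 - 1/(P-1) - E" unfolding \<beta>_def P_def ..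
    ultimately show ?thesis using ident_aux[of P E x] by simp
  qed
  define K :: real where "K = 28 * P / E"
  have K0: "K > 0" unfolding K_def using E0 P8 by simp
  have bound: "real (counting A n) \<le> \<beta> * real n + K" for n
  proof (induction n rule: less_induct)
    case (less n)
    show ?case
    proof (cases "real n \<le> K")
      case True
      have "{a\<in>A. a \<le> n} \<subseteq> {1..n}" using assms(2) by auto
      then have "card {a\<in>A. a \<le> n} \<le> card {1..n}" by (intro card_mono) auto
      then have "counting A n \<le> n" unfolding counting_def by simp
      then have "real (counting A n) \<le> real n" by simp
      moreover have "0 \<le> \<beta> * real n" using \<beta>0 by simp
      ultimately show ?thesis using True by linarith
    next
      case False
      then have n0: "n > 0" using K0 by (cases n) auto
      have "n div 2^k < n" using n0 k3 one_less_power[of "2::nat" k] by (intro div_less_dividend) auto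
      from less[OF this] have IH: "real (counting A (n div 2^k)) \<le> \<beta> * real (n div 2^k) + K" .
      have "real (n div 2^k) \<le> real n / 2^k" using div_upper[of n "2^k"] by simp
      then have "\<beta> * real (n div 2^k) \<le> \<beta> * (real n / P)" unfolding P_def using \<beta>0 by (intro mult_left_mono) auto
      moreover have st: "real (counting A n) \<le> real (counting A (n div 2^k)) + real n - 2 * (real n / P) - E * real n + 28"
        using step_real[OF k3 assms(3), of n] unfolding E_def P_def by simp
      moreover have "28 \<le> E * (real n / P)"
      proof -
        have "28 * P / E < real n" using False K_def by simp
        then have "28 * P < real n * E" using E0 by (simp add: field_simps)
        then show ?thesis using P8 by (simp add: field_simps)
      qed
      ultimately show ?thesis using IH ident[of "real n"] by linarith
    qed
  qed
  have ev: "eventually (\<lambda>n. ereal (real (counting A n) / real n) \<le> ereal (\<beta> + K / real n)) sequentially"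
  proof (rule eventually_sequentiallyI[of 1])
    fix n :: nat assume "1 \<le> n"
    then have "real (counting A n) / real n \<le> (\<beta> * real n + K) / real n"
      using bound[of n] by (intro divide_right_mono) auto
    also have "\<dots> = \<beta> + K / real n" using \<open>1 \<le> n\<close> by (simp add: field_simps)
    finally show "ereal (real (counting A n) / real n) \<le> ereal (\<beta> + K / real n)" by simp
  qed
  have "upper_density A \<le> limsup (\<lambda>n. ereal (\<beta> + K / real n))"
    unfolding upper_density_def by (rule Limsup_mono[OF ev])
  also have "limsup (\<lambda>n. ereal (\<beta> + K / real n)) = ereal \<beta>"
  proof (rule lim_imp_Limsup)
    show "sequentially \<noteq> bot" by simp
    have "(\<lambda>n. \<beta> + K / real n) \<longlonglongrightarrow> \<beta> + 0"
      by (intro tendsto_add tendsto_const lim_const_over_n)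
    then show "(\<lambda>n. ereal (\<beta> + K / real n)) \<longlonglongrightarrow> ereal \<beta>" by simp
  qed
  finally show ?thesis using tgt by simp
qed

end
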